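(* Let $q$ be a prime power. (i) Let $C$ be an $[n,k,d]$ linear code over $\mathbb{F}_q$ whose Euclidean hull $C\cap C^{\perp_E}$ has dimension $l$. If $l<d$, then there exists a set $T$ of $l$ coordinate positions such that the punctured code $C^T$ of $C$ on $T$ is a Euclidean LCD $[n-l,k,d^*]$ code with $d^*\ge d-l$. (ii) The same holds for an $[n,k,d]$ linear code over $\mathbb{F}_{q^2}$ whose Hermitian hull $C\cap C^{\perp_H}$ has dimension $l$, with "Euclidean LCD" replaced by "Hermitian LCD".
   Context: An $[n,k,d]$ linear code over a finite field $F$ is a $k$-dimensional subspace of $F^n$ with minimum nonzero Hamming weight $d$. Euclidean inner product on $\mathbb{F}_q^n$: $\langle x,y\rangle_E=\sum x_iy_i$; Hermitian inner product on $\mathbb{F}_{q^2}^n$: $\langle x,y\rangle_H=\sum x_iy_i^q$; $C^{\perp_E},C^{\perp_H}$ are the corresponding duals. The hull of $C$ is $C\cap C^{\perp}$; $C$ is LCD if its hull is $\{0\}$. For a set $T$ of coordinate positions, the punctured code $C^T$ is obtained by deleting the coordinates in $T$ from every codeword of $C$. *)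

theory Defs
  imports Complex_Main "HOL-Library.Function_Algebras"
begin

text \<open>Vectors of length n over a field are functions nat => 'a vanishing outside
  the coordinate set {..<n}.  Punctured codes keep the remaining coordinate set
  (no re-indexing); its length is the cardinality of the coordinate set.\<close>

definition sc :: "'a::field \<Rightarrow> (nat \<Rightarrow> 'a) \<Rightarrow> (nat \<Rightarrow> 'a)" where
  "sc c x = (\<lambda>i. c * x i)"

lemma vector_space_sc: "vector_space (sc :: 'a::field \<Rightarrow> _)"
  by unfold_locales (auto simp: sc_def fun_eq_iff algebra_simps)

definition vecs :: "nat set \<Rightarrow> (nat \<Rightarrow> 'a::zero) set" where
  "vecs I = {x. \<forall>i. i \<notin> I \<longrightarrow> x i = 0}"

definition linear_code :: "nat set \<Rightarrow> (nat \<Rightarrow> 'a::field) set \<Rightarrow> bool" where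
  "linear_code I C \<longleftrightarrow> C \<subseteq> vecs I \<and> module.subspace sc C"

definition cdim :: "(nat \<Rightarrow> 'a::field) set \<Rightarrow> nat" where
  "cdim C = vector_space.dim sc C"

definition wt :: "(nat \<Rightarrow> 'a::zero) \<Rightarrow> nat" where
  "wt x = card {i. x i \<noteq> 0}"

definition min_dist :: "(nat \<Rightarrow> 'a::zero) set \<Rightarrow> nat" where
  "min_dist C = Min {wt x | x. x \<in> C \<and> x \<noteq> 0}"

definition eucl_dual :: "nat set \<Rightarrow> (nat \<Rightarrow> 'a::field) set \<Rightarrow> (nat \<Rightarrow> 'a) set" where
  "eucl_dual I C = {y \<in> vecs I. \<forall>x\<in>C. (\<Sum>i\<in>I. x i * y i) = 0}"

text \<open>Hermitian dual over F_{q^2}: conjugation is y |-> y^q.\<close>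
definition herm_dual :: "nat \<Rightarrow> nat set \<Rightarrow> (nat \<Rightarrow> 'a::field) set \<Rightarrow> (nat \<Rightarrow> 'a) set" where
  "herm_dual q I C = {y \<in> vecs I. \<forall>x\<in>C. (\<Sum>i\<in>I. x i * y i ^ q) = 0}"

definition eucl_hull :: "nat set \<Rightarrow> (nat \<Rightarrow> 'a::field) set \<Rightarrow> (nat \<Rightarrow> 'a) set" where
  "eucl_hull I C = C \<inter> eucl_dual I C"

definition herm_hull :: "nat \<Rightarrow> nat set \<Rightarrow> (nat \<Rightarrow> 'a::field) set \<Rightarrow> (nat \<Rightarrow> 'a) set" where
  "herm_hull q I C = C \<inter> herm_dual q I C"

definition eucl_LCD :: "nat set \<Rightarrow> (nat \<Rightarrow> 'a::field) set \<Rightarrow> bool" where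
  "eucl_LCD I C \<longleftrightarrow> eucl_hull I C = {0}"

definition herm_LCD :: "nat \<Rightarrow> nat set \<Rightarrow> (nat \<Rightarrow> 'a::field) set \<Rightarrow> bool" where
  "herm_LCD q I C \<longleftrightarrow> herm_hull q I C = {0}"

definition puncture :: "nat set \<Rightarrow> (nat \<Rightarrow> 'a::zero) set \<Rightarrow> (nat \<Rightarrow> 'a) set" where
  "puncture T C = (\<lambda>x. \<lambda>i. if i \<in> T then 0 else x i) ` C"

end

theory Submission
  imports Defs "HOL-Computational_Algebra.Primes" "HOL-Algebra.Sylow" "HOL-Algebra.Multiplicative_Group"
begin


definition addgrp :: "'a::field itself \<Rightarrow> 'a monoid" where
  "addgrp _ = \<lparr>carrier = UNIV, monoid.mult = (+), one = 0\<rparr>"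

lemma addgrp_group: "group (addgrp TYPE('a::field))"
  unfolding addgrp_def
  by (rule groupI) (auto simp: add.assoc intro: exI[of _ "- _"])

lemma addgrp_pow: "x [^]\<^bsub>(addgrp TYPE('a::field))\<lparr>carrier := H\<rparr>\<^esub> (n::nat) = of_nat n * (x::'a)"
  by (induction n) (auto simp: addgrp_def algebra_simps)

lemma prime_dvd_card_CHAR:
  fixes r :: nat
  assumes r: "prime r" "r dvd card (UNIV :: 'a::{finite,field} set)"
  shows "r = CHAR('a)"
proof -
  let ?G = "addgrp TYPE('a)"
  have og: "order ?G = r ^ 1 * (card (UNIV :: 'a set) div r)"
    using r by (simp add: order_def addgrp_def)
  obtain H where H: "subgroup H ?G" "card H = r"
    using sylow_thm[OF r(1) addgrp_group og] by (auto simp: addgrp_def)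
  have gH: "group (?G\<lparr>carrier := H\<rparr>)"
    using subgroup.subgroup_is_group[OF H(1) addgrp_group] .
  have "card H \<ge> 2" using H(2) r(1) prime_ge_2_nat by auto
  have "\<not> H \<subseteq> {0}"
  proof
    assume "H \<subseteq> {0}"
    then have "card H \<le> card {0::'a}" by (intro card_mono) auto
    then show False using \<open>card H \<ge> 2\<close> by simp
  qed
  then obtain x where x: "x \<in> H" "x \<noteq> 0" by auto
  have "x [^]\<^bsub>?G\<lparr>carrier := H\<rparr>\<^esub> order (?G\<lparr>carrier := H\<rparr>) = \<one>\<^bsub>?G\<lparr>carrier := H\<rparr>\<^esub>"
    using group.pow_order_eq_1[OF gH] x by simp
  moreover have "order (?G\<lparr>carrier := H\<rparr>) = r" using H(2) by (simp add: order_def)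
  moreover have "\<one>\<^bsub>?G\<lparr>carrier := H\<rparr>\<^esub> = (0::'a)" by (simp add: addgrp_def)
  ultimately have "of_nat r * x = 0"
    by (simp only: addgrp_pow)
  then have "of_nat r = (0::'a)" using x by simp
  then have "CHAR('a) dvd r" by (simp add: of_nat_eq_0_iff_char_dvd)
  moreover have "CHAR('a) \<noteq> 1"
    by simp
  ultimately show ?thesis using r(1) unfolding prime_nat_iff by force
qed

lemma prime_CHAR_finite: "prime CHAR('a::{finite,field})"
  using prime_CHAR_semidom finite_imp_CHAR_pos[of] by (metis finite_UNIV)

lemma all_factors_power:
  fixes q p :: nat
  shows "q > 0 \<Longrightarrow> (\<forall>r. prime r \<longrightarrow> r dvd q \<longrightarrow> r = p) \<Longrightarrow> \<exists>j. q = p ^ j"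
proof (induction q rule: less_induct)
  case (less q)
  show ?case
  proof (cases "q = 1")
    case True then show ?thesis by (intro exI[of _ 0]) simp
  next
    case False
    then obtain r where r: "prime r" "r dvd q" using prime_factor_nat by blast
    then have rp: "r = p" using less.prems by blast
    then obtain q' where q': "q = p * q'" using r by (auto elim: dvdE)
    have "q' < q" "q' > 0" using q' less.prems(1) r rp prime_gt_1_nat by auto
    moreover have "\<forall>r. prime r \<longrightarrow> r dvd q' \<longrightarrow> r = p" using less.prems(2) q' by auto
    ultimately obtain j where "q' = p ^ j" using less.IH by blast
    then show ?thesis using q' by (intro exI[of _ "Suc j"]) simp
  qed
qed

lemma power_card_same: "(x::'a::{finite,field}) ^ card (UNIV :: 'a set) = x"
proof (cases "x = 0")
  case False
  have "x * (\<Prod>y\<in>UNIV-{0}. x * y) = x * x ^ (card (UNIV :: 'a set) - 1) * \<Prod>(UNIV-{0})"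
    by (simp add: prod.distrib mult_ac)
  also have "x * x ^ (card (UNIV :: 'a set) - 1) = x ^ Suc (card (UNIV :: 'a set) - 1)"
    by (subst power_Suc) auto
  also have "Suc (card (UNIV :: 'a set) - 1) = card (UNIV :: 'a set)"
    using finite_UNIV_card_ge_0[where ?'a = 'a] by simp
  also have "(\<Prod>y\<in>UNIV-{0}. x * y) = (\<Prod>y\<in>UNIV-{0}. y)"
    by (rule prod.reindex_bij_witness[of _ "\<lambda>y. y / x" "\<lambda>y. x * y"]) (use False in auto)
  finally show ?thesis
    by simp
qed (use finite_UNIV_card_ge_0[where ?'a = 'a] in auto)

lemma frob_props:
  assumes "card (UNIV :: 'a::{finite,field} set) = q ^ 2"
  shows "q > 0" "\<forall>a b::'a. (a + b) ^ q = a ^ q + b ^ q" "\<forall>a::'a. (a ^ q) ^ q = a"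
proof -
  show q0: "q > 0" using assms finite_UNIV_card_ge_0[where ?'a = 'a] by (cases q) auto
  have "\<forall>r. prime r \<longrightarrow> r dvd q \<longrightarrow> r = CHAR('a)"
    using prime_dvd_card_CHAR assms proof (intro allI impI)
    fix r assume "prime r" "r dvd q"
    then have "r dvd card (UNIV :: 'a set)" using assms by (simp add: power2_eq_square)
    then show "r = CHAR('a)" using prime_dvd_card_CHAR \<open>prime r\<close> by blast
  qed
  then obtain j where j: "q = CHAR('a) ^ j" using all_factors_power q0 by blast
  show "\<forall>a b::'a. (a + b) ^ q = a ^ q + b ^ q"
    using freshmans_dream'[OF prime_CHAR_finite j] by blast
  show "\<forall>a::'a. (a ^ q) ^ q = a"
    using power_card_same assms by (metis power2_eq_square power_mult)
qed



interpretation V: vector_space "sc :: 'a::field \<Rightarrow> (nat \<Rightarrow> 'a) \<Rightarrow> (nat \<Rightarrow> 'a)"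
  by (rule vector_space_sc)

lemma sc_apply: "sc c x i = c * x i"
  by (simp add: sc_def)

definition msk :: "nat set \<Rightarrow> (nat \<Rightarrow> 'a::field) \<Rightarrow> (nat \<Rightarrow> 'a)" where
  "msk T x = (\<lambda>i. if i \<in> T then x i else 0)"

definition unitv :: "nat \<Rightarrow> (nat \<Rightarrow> 'a::field)" where
  "unitv j = (\<lambda>i. if i = j then 1 else 0)"

lemma lin_msk: "Vector_Spaces.linear sc sc (msk T :: (nat \<Rightarrow> 'a::field) \<Rightarrow> _)"
  by (auto simp: Vector_Spaces.linear_iff vector_space_sc msk_def fun_eq_iff sc_def)

lemma dim_image_inj:
  fixes f :: "(nat \<Rightarrow> 'a::field) \<Rightarrow> (nat \<Rightarrow> 'a)"
  assumes lf: "Vector_Spaces.linear sc sc f"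
    and fi: "inj_on f (V.span S)"
  shows "V.dim (f ` S) = V.dim S"
proof -
  interpret lf: Vector_Spaces.linear sc sc f by fact
  obtain B where B: "B \<subseteq> S" "V.independent B" "S \<subseteq> V.span B" "card B = V.dim S"
    using V.basis_exists[of S] by auto
  then have "V.span S = V.span B"
    using V.span_mono[of B S] V.span_mono[of S "V.span B"] V.span_span[of B] by auto
  moreover have "card (f ` B) = card B"
    using assms card_image[of f B] inj_on_subset[of f "V.span S" B] B V.span_superset by auto
  moreover have "(f ` B) \<subseteq> (f ` S)"
    using B by auto
  ultimately show ?thesis
    by (metis B(2) B(4) fi lf.dependent_inj_imageD lf.span_image V.dim_eq_card_independent V.dim_span)
qed

lemma subspace_coord0: "V.subspace {v :: nat \<Rightarrow> 'a::field. v j = 0}"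
  by (auto simp: V.subspace_def sc_apply)

lemma unit_indep: "V.independent (unitv ` T :: (nat \<Rightarrow> 'a::field) set)"
proof
  assume "V.dependent (unitv ` T :: (nat \<Rightarrow> 'a) set)"
  then obtain a :: "nat \<Rightarrow> 'a" where a: "a \<in> unitv ` T" "a \<in> V.span (unitv ` T - {a})"
    unfolding V.dependent_def by blast
  then obtain j where j: "a = unitv j" by blast
  have "x \<in> {v :: nat \<Rightarrow> 'a. v j = 0}" if x: "x \<in> unitv ` T - {a}" for x :: "nat \<Rightarrow> 'a"
  proof -
    obtain i where i: "x = unitv i" using x by blast
    have "i \<noteq> j" using x i j by blast
    then show ?thesis using i by (simp add: unitv_def)
  qed
  then have "unitv ` T - {a} \<subseteq> {v :: nat \<Rightarrow> 'a. v j = 0}" by blast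
  then have "V.span (unitv ` T - {a}) \<subseteq> {v. v j = 0}"
    using V.span_minimal subspace_coord0 by blast
  then have "a j = 0" using a(2) by blast
  moreover have "a j = 1" using j by (simp add: unitv_def)
  ultimately show False by simp
qed

lemma vecs_span: "finite T \<Longrightarrow> vecs T \<subseteq> V.span (unitv ` T :: (nat \<Rightarrow> 'a::field) set)"
proof (induction T rule: finite_induct)
  case empty
  have "vecs {} = {0 :: nat \<Rightarrow> 'a}" by (auto simp: vecs_def fun_eq_iff)
  then show ?case by (simp add: V.span_zero)
next
  case (insert j T)
  show ?case
  proof
    fix v :: "nat \<Rightarrow> 'a" assume v: "v \<in> vecs (insert j T)"
    have "v - sc (v j) (unitv j) \<in> vecs T" using v by (auto simp: vecs_def unitv_def sc_apply)
    then have "v - sc (v j) (unitv j) \<in> V.span (unitv ` insert j T)"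
      using insert.IH V.span_mono[of "unitv ` T" "unitv ` insert j T"] by blast
    moreover have "sc (v j) (unitv j) \<in> V.span (unitv ` insert j T)"
      by (intro V.span_scale V.span_base) auto
    ultimately have "(v - sc (v j) (unitv j)) + sc (v j) (unitv j) \<in> V.span (unitv ` insert j T)"
      by (rule V.span_add)
    then show "v \<in> V.span (unitv ` insert j T)" by simp
  qed
qed

lemma sum_pow_q:
  assumes fa: "\<forall>a b::'a::field. (a+b)^q = a^q + b^q" and q0: "q > 0"
  shows "(\<Sum>i\<in>A. f i)^q = (\<Sum>i\<in>A. (f i :: 'a) ^ q)"
  by (induction A rule: infinite_finite_induct) (use fa q0 in auto)

lemma wt_support_le:
  assumes "finite S" "\<And>i. i \<notin> S \<Longrightarrow> x i = 0"
  shows "wt x \<le> card S"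
  unfolding wt_def using assms by (intro card_mono) auto



lemma main_gen:
  fixes C :: "(nat \<Rightarrow> 'a::{finite,field}) set" and q n d l :: nat
  assumes fa: "\<forall>a b::'a. (a+b)^q = a^q + b^q" and fi: "\<forall>a::'a. (a^q)^q = a" and q0: "q > 0"
    and lc: "linear_code {..<n} C" and md: "min_dist C = d"
    and hl: "cdim (herm_hull q {..<n} C) = l" and ld: "l < d"
  shows "\<exists>T. T \<subseteq> {..<n} \<and> card T = l \<and>
          linear_code ({..<n} - T) (puncture T C) \<and>
          card ({..<n} - T) = n - l \<and>
          herm_LCD q ({..<n} - T) (puncture T C) \<and>
          cdim (puncture T C) = cdim C \<and>
          min_dist (puncture T C) \<ge> d - l"
proof -
  define I where "I = {..<n}"
  define H where "H = herm_hull q I C"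
  define W where "W = V.span H"
  have CV: "C \<subseteq> vecs I" and Csub: "V.subspace C"
    using lc by (auto simp: linear_code_def I_def)
  have HC: "H \<subseteq> C" by (auto simp: H_def herm_hull_def)
  have WC: "W \<subseteq> C" using V.span_minimal[OF HC Csub] W_def by simp
  have WV: "W \<subseteq> vecs I" using WC CV by blast
  have Hdual: "\<And>h x. h \<in> H \<Longrightarrow> x \<in> C \<Longrightarrow> (\<Sum>i\<in>I. x i * h i ^ q) = 0"
    by (auto simp: H_def herm_hull_def herm_dual_def)
  have finI: "finite I" by (simp add: I_def)
  define P where "P T \<longleftrightarrow> T \<subseteq> I \<and> (\<forall>w\<in>W. (\<forall>i\<in>T. w i = 0) \<longrightarrow> w = 0)" for T
  have PI: "P I" using WV by (auto simp: P_def vecs_def fun_eq_iff)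
  obtain T where PT: "P T" and Tmin: "\<And>T'. P T' \<Longrightarrow> card T \<le> card T'"
    using ex_has_least_nat[of P I card] PI by blast
  have TI: "T \<subseteq> I" and Tinj: "\<And>w. w \<in> W \<Longrightarrow> \<forall>i\<in>T. w i = 0 \<Longrightarrow> w = 0"
    using PT P_def by auto
  have finT: "finite T" using TI finI finite_subset by blast
  have unitW: "\<exists>u\<in>W. \<forall>i\<in>T. u i = (if i = j then 1 else 0)" if jT: "j \<in> T" for j
  proof -
    have "\<not> P (T - {j})"
    proof
      assume "P (T - {j})"
      then have "card T \<le> card (T - {j})" by (rule Tmin)
      moreover have "card (T - {j}) < card T" using finT jT by (rule card_Diff1_less)
      ultimately show False by simp
    qed
    then obtain w where w: "w \<in> W" "\<forall>i\<in>T-{j}. w i = 0" "w \<noteq> 0"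
      using TI by (auto simp: P_def)
    have wj: "w j \<noteq> 0"
    proof
      assume "w j = 0"
      then have "\<forall>i\<in>T. w i = 0" using w(2) by auto
      then show False using Tinj[OF w(1)] w(3) by simp
    qed
    let ?u = "sc (inverse (w j)) w"
    have "?u \<in> W" using w(1) W_def V.span_scale by simp
    moreover have "\<forall>i\<in>T. ?u i = (if i = j then 1 else 0)" using w(2) wj by (auto simp: sc_apply)
    ultimately show ?thesis by blast
  qed
  have spanW: "V.span W = W" by (simp add: W_def V.span_span)
  have inj_mT: "inj_on (msk T) (V.span W)"
  proof (rule inj_onI)
    fix x y assume xy: "x \<in> V.span W" "y \<in> V.span W" "msk T x = msk T y"
    then have "x - y \<in> W" using V.span_diff spanW by metis
    moreover have "\<forall>i\<in>T. (x - y) i = 0"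
    proof
      fix i assume "i \<in> T"
      then have "msk T x i = msk T y i" using xy(3) by simp
      then show "(x - y) i = 0" using \<open>i \<in> T\<close> by (simp add: msk_def)
    qed
    ultimately show "x = y" using Tinj by force
  qed
  have "V.dim (msk T ` W) = V.dim W" by (rule dim_image_inj[OF lin_msk inj_mT])
  also have "V.dim W = l" using hl by (simp add: W_def H_def I_def cdim_def)
  finally have d1: "V.dim (msk T ` W) = l" .
  have "card (unitv ` T :: (nat \<Rightarrow> 'a) set) = V.dim (msk T ` W)"
  proof (rule V.basis_card_eq_dim)
    show "unitv ` T \<subseteq> msk T ` W"
    proof
      fix v assume "v \<in> (unitv ` T :: (nat \<Rightarrow> 'a) set)"
      then obtain j where j: "j \<in> T" "v = unitv j" by blast
      obtain u where u: "u \<in> W" "\<forall>i\<in>T. u i = (if i = j then 1 else 0)" using unitW[OF j(1)] by blast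
      have "msk T u = v" using u(2) j by (auto simp: msk_def unitv_def fun_eq_iff)
      then show "v \<in> msk T ` W" using u(1) by blast
    qed
    have "msk T ` W \<subseteq> vecs T" by (auto simp: msk_def vecs_def)
    then show "msk T ` W \<subseteq> V.span (unitv ` T)" using vecs_span[OF finT] by blast
    show "V.independent (unitv ` T)" by (rule unit_indep)
  qed
  moreover have "card (unitv ` T :: (nat \<Rightarrow> 'a) set) = card T"
  proof (rule card_image, rule inj_onI)
    fix i j assume "(unitv i :: nat \<Rightarrow> 'a) = unitv j"
    then have "(unitv i :: nat \<Rightarrow> 'a) i = unitv j i" by simp
    then show "i = j" by (auto simp: unitv_def split: if_splits)
  qed
  ultimately have cardT: "card T = l" using d1 by simp

  define pf where "pf = (msk (- T) :: (nat \<Rightarrow> 'a) \<Rightarrow> _)"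
  interpret lp: Vector_Spaces.linear sc sc pf unfolding pf_def by (rule lin_msk)
  have pf_apply: "\<And>x i. pf x i = (if i \<in> T then 0 else x i)" by (simp add: pf_def msk_def)
  have pf0: "pf 0 = 0" by (simp add: fun_eq_iff pf_apply)
  have punc: "puncture T C = pf ` C"
    unfolding puncture_def by (intro image_cong refl) (simp add: fun_eq_iff pf_apply)
  have C0: "0 \<in> C" using Csub V.subspace_0 by blast
  have cardI: "card I = n" by (simp add: I_def)
  have wtI: "\<And>x. x \<in> vecs I \<Longrightarrow> wt x \<le> n"
    using wt_support_le[OF finI] cardI by (auto simp: vecs_def)
  have wfin: "finite {wt x |x. x \<in> C \<and> x \<noteq> 0}"
    by (rule finite_subset[of _ "{..n}"]) (use wtI CV in auto)
  have dle: "d \<le> wt x" if "x \<in> C" "x \<noteq> 0" for x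
    unfolding md[symmetric] min_dist_def using that wfin by (intro Min_le) auto
  have inj_pf: "inj_on pf C"
  proof (rule inj_onI)
    fix x y assume xy: "x \<in> C" "y \<in> C" "pf x = pf y"
    have zC: "x - y \<in> C" using V.subspace_diff[OF Csub xy(1,2)] .
    have z0: "(x - y) i = 0" if "i \<notin> T" for i
    proof -
      have "pf x i = pf y i" using xy(3) by simp
      then show ?thesis using that by (simp add: pf_apply)
    qed
    have "wt (x - y) \<le> card T" by (rule wt_support_le[OF finT]) (rule z0)
    then have "wt (x - y) \<le> l" using cardT by simp
    then have "x - y = 0" using dle[OF zC] ld by (meson le_trans not_le)
    then show "x = y" by simp
  qed
  have spanC: "V.span C = C" using Csub by simp
  have cdimP: "cdim (pf ` C) = cdim C"
  proof -
    have ijs: "inj_on pf (V.span C)" by (subst spanC) (rule inj_pf)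
    show ?thesis unfolding cdim_def using dim_image_inj[OF lin_msk ijs[unfolded pf_def]] by (simp add: pf_def)
  qed
  have PV: "pf ` C \<subseteq> vecs (I - T)" using CV by (auto simp: vecs_def pf_apply)
  have Psub: "V.subspace (pf ` C)" by (rule lp.subspace_image[OF Csub])
  have cardIT: "card (I - T) = n - l" using card_Diff_subset[OF finT TI] cardI cardT by simp
  have wt_pf: "wt x \<le> wt (pf x) + l" if "x \<in> C" for x
  proof -
    have fin: "finite {i. pf x i \<noteq> 0}"
      by (rule finite_subset[OF _ finI]) (use that CV in \<open>auto simp: vecs_def pf_apply\<close>)
    have "{i. x i \<noteq> 0} \<subseteq> {i. pf x i \<noteq> 0} \<union> T" by (auto simp: pf_apply)
    then have "card {i. x i \<noteq> 0} \<le> card ({i. pf x i \<noteq> 0} \<union> T)"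
      using fin finT by (intro card_mono) auto
    also have "\<dots> \<le> card {i. pf x i \<noteq> 0} + card T" by (rule card_Un_le)
    finally show ?thesis using cardT by (simp add: wt_def)
  qed
  have mdP: "min_dist (pf ` C) \<ge> d - l"
  proof (cases "\<exists>x\<in>C. x \<noteq> 0")
    case True
    then obtain x0 where x0: "x0 \<in> C" "x0 \<noteq> 0" by blast
    have "pf x0 \<noteq> 0" using inj_pf x0 C0 pf0 by (metis inj_on_def)
    then have ne: "{wt y |y. y \<in> pf ` C \<and> y \<noteq> 0} \<noteq> {}" using x0 by blast
    have finP: "finite {wt y |y. y \<in> pf ` C \<and> y \<noteq> 0}"
      by (rule finite_subset[of _ "{..n}"]) (use wtI CV PV in \<open>auto simp: vecs_def\<close>)
    show ?thesis unfolding min_dist_def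
    proof (subst Min_ge_iff[OF finP ne], safe)
      fix y x assume "x \<in> C" "pf x \<noteq> 0"
      then have "x \<noteq> 0" using pf0 by auto
      then show "d - l \<le> wt (pf x)" using dle[OF \<open>x \<in> C\<close>] wt_pf[OF \<open>x \<in> C\<close>] by simp
    qed
  next
    case False
    then have "{wt y |y. y \<in> pf ` C \<and> y \<noteq> 0} = {wt x |x. x \<in> C \<and> x \<noteq> 0}"
      using pf0 by auto
    then show ?thesis using md by (simp add: min_dist_def)
  qed
  have LCD: "herm_hull q (I - T) (pf ` C) = {0}"
  proof
    have "0 \<in> pf ` C" using C0 pf0 by force
    moreover have "0 \<in> herm_dual q (I - T) (pf ` C)"
      using q0 by (simp add: herm_dual_def vecs_def zero_power)
    ultimately show "{0} \<subseteq> herm_hull q (I - T) (pf ` C)" by (simp add: herm_hull_def)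
  next
    show "herm_hull q (I - T) (pf ` C) \<subseteq> {0}"
    proof
      fix y' assume y': "y' \<in> herm_hull q (I - T) (pf ` C)"
      then obtain y where y: "y \<in> C" "y' = pf y" by (auto simp: herm_hull_def)
      have rad: "(\<Sum>i\<in>I - T. x i * y i ^ q) = 0" if "x \<in> C" for x
      proof -
        have "(\<Sum>i\<in>I - T. pf x i * pf y i ^ q) = 0"
          using y' y that by (auto simp: herm_hull_def herm_dual_def)
        moreover have "(\<Sum>i\<in>I - T. pf x i * pf y i ^ q) = (\<Sum>i\<in>I - T. x i * y i ^ q)"
          by (rule sum.cong) (auto simp: pf_apply)
        ultimately show ?thesis by simp
      qed
      have split: "(\<Sum>i\<in>I. f i) = (\<Sum>i\<in>I - T. f i) + (\<Sum>i\<in>T. f i)" for f :: "nat \<Rightarrow> 'a"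
        by (rule sum.subset_diff[OF TI finI])
      have hT: "(\<Sum>i\<in>T. h i * y i ^ q) = 0" if "h \<in> H" for h
      proof -
        have "(\<Sum>i\<in>I. y i * h i ^ q) = 0" using Hdual[OF that y(1)] .
        then have "(\<Sum>i\<in>I. y i * h i ^ q) ^ q = 0" using q0 by simp
        moreover have "(\<Sum>i\<in>I. y i * h i ^ q) ^ q = (\<Sum>i\<in>I. (y i * h i ^ q) ^ q)"
          by (rule sum_pow_q[OF fa q0])
        ultimately have "(\<Sum>i\<in>I. (y i * h i ^ q) ^ q) = 0" by simp
        then have a: "(\<Sum>i\<in>I. h i * y i ^ q) = 0"
          using fi by (simp add: power_mult_distrib mult.commute)
        have b: "(\<Sum>i\<in>I - T. h i * y i ^ q) = 0" using rad that HC by blast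
        show ?thesis using a b split[of "\<lambda>i. h i * y i ^ q"] by simp
      qed
      have "W \<subseteq> {w. (\<Sum>i\<in>T. w i * y i ^ q) = 0}"
        unfolding W_def
      proof (rule V.span_minimal)
        show "H \<subseteq> {w. (\<Sum>i\<in>T. w i * y i ^ q) = 0}" using hT by blast
        show "V.subspace {w. (\<Sum>i\<in>T. w i * y i ^ q) = 0}"
        proof (rule V.subspaceI)
          fix x z :: "nat \<Rightarrow> 'a" and c :: 'a
          assume x: "x \<in> {w. (\<Sum>i\<in>T. w i * y i ^ q) = 0}" and z: "z \<in> {w. (\<Sum>i\<in>T. w i * y i ^ q) = 0}"
          have "(\<Sum>i\<in>T. (x + z) i * y i ^ q) = (\<Sum>i\<in>T. x i * y i ^ q) + (\<Sum>i\<in>T. z i * y i ^ q)"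
            by (simp add: distrib_right sum.distrib)
          then show "x + z \<in> {w. (\<Sum>i\<in>T. w i * y i ^ q) = 0}" using x z by simp
        next
          fix x :: "nat \<Rightarrow> 'a" and c :: 'a
          assume x: "x \<in> {w. (\<Sum>i\<in>T. w i * y i ^ q) = 0}"
          have "(\<Sum>i\<in>T. sc c x i * y i ^ q) = c * (\<Sum>i\<in>T. x i * y i ^ q)"
            by (simp add: sum_distrib_left mult.assoc sc_apply)
          then show "sc c x \<in> {w. (\<Sum>i\<in>T. w i * y i ^ q) = 0}" using x by simp
        qed simp
      qed
      then have wT: "\<And>w. w \<in> W \<Longrightarrow> (\<Sum>i\<in>T. w i * y i ^ q) = 0" by blast
      have yT: "y j = 0" if jT: "j \<in> T" for j
      proof -
        obtain u where u: "u \<in> W" "\<forall>i\<in>T. u i = (if i = j then 1 else 0)" using unitW[OF jT] by blast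
        have "(\<Sum>i\<in>T. u i * y i ^ q) = (\<Sum>i\<in>T. if i = j then y i ^ q else 0)"
          by (rule sum.cong) (use u in auto)
        also have "\<dots> = y j ^ q" using jT finT by simp
        finally have "y j ^ q = 0" using wT[OF u(1)] by simp
        then show ?thesis by simp
      qed
      have "y \<in> herm_dual q I C"
      proof -
        have "(\<Sum>i\<in>I. x i * y i ^ q) = 0" if "x \<in> C" for x
        proof -
          have "(\<Sum>i\<in>T. x i * y i ^ q) = 0" using yT q0 by (simp add: zero_power)
          then show ?thesis using rad[OF that] split[of "\<lambda>i. x i * y i ^ q"] by simp
        qed
        then show ?thesis using y(1) CV by (auto simp: herm_dual_def)
      qed
      then have "y \<in> H" using y(1) by (simp add: H_def herm_hull_def)
      then have "y \<in> W" unfolding W_def by (rule V.span_base)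
      then have "y = 0" using Tinj yT by blast
      then show "y' \<in> {0}" using y(2) pf0 by simp
    qed
  qed
  show ?thesis
    by (intro exI[of _ T])
      (use TI cardT Psub PV cardIT LCD cdimP mdP in \<open>simp_all add: I_def punc linear_code_def herm_LCD_def\<close>)
qed


theorem theorem3p3:
  shows
  "(\<forall>(n::nat) (k::nat) (d::nat) (l::nat) (C :: (nat \<Rightarrow> 'a::{finite,field}) set).
      linear_code {..<n} C \<and> cdim C = k \<and> min_dist C = d \<and>
      cdim (eucl_hull {..<n} C) = l \<and> l < d \<longrightarrow>
      (\<exists>T. T \<subseteq> {..<n} \<and> card T = l \<and>
          linear_code ({..<n} - T) (puncture T C) \<and>
          card ({..<n} - T) = n - l \<and>
          eucl_LCD ({..<n} - T) (puncture T C) \<and>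
          cdim (puncture T C) = k \<and>
          min_dist (puncture T C) \<ge> d - l))
   \<and>
   (\<forall>(q::nat) (n::nat) (k::nat) (d::nat) (l::nat) (C :: (nat \<Rightarrow> 'b::{finite,field}) set).
      card (UNIV :: 'b set) = q ^ 2 \<and>
      linear_code {..<n} C \<and> cdim C = k \<and> min_dist C = d \<and>
      cdim (herm_hull q {..<n} C) = l \<and> l < d \<longrightarrow>
      (\<exists>T. T \<subseteq> {..<n} \<and> card T = l \<and>
          linear_code ({..<n} - T) (puncture T C) \<and>
          card ({..<n} - T) = n - l \<and>
          herm_LCD q ({..<n} - T) (puncture T C) \<and>
          cdim (puncture T C) = k \<and>
          min_dist (puncture T C) \<ge> d - l))"
proof (intro conjI allI impI)
  fix n k d l :: nat and C :: "(nat \<Rightarrow> 'a::{finite,field}) set"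
  assume a: "linear_code {..<n} C \<and> cdim C = k \<and> min_dist C = d \<and>
      cdim (eucl_hull {..<n} C) = l \<and> l < d"
  have eh: "eucl_hull I D = herm_hull 1 I D" for I and D :: "(nat \<Rightarrow> 'a) set"
    by (simp add: eucl_hull_def herm_hull_def eucl_dual_def herm_dual_def)
  have el: "eucl_LCD I D = herm_LCD 1 I D" for I and D :: "(nat \<Rightarrow> 'a) set"
    by (simp add: eucl_LCD_def herm_LCD_def eh)
  have "\<exists>T. T \<subseteq> {..<n} \<and> card T = l \<and>
          linear_code ({..<n} - T) (puncture T C) \<and>
          card ({..<n} - T) = n - l \<and>
          herm_LCD 1 ({..<n} - T) (puncture T C) \<and>
          cdim (puncture T C) = cdim C \<and>
          min_dist (puncture T C) \<ge> d - l"
    by (rule main_gen) (use a in \<open>simp_all add: eh\<close>)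
  then show "\<exists>T. T \<subseteq> {..<n} \<and> card T = l \<and>
          linear_code ({..<n} - T) (puncture T C) \<and>
          card ({..<n} - T) = n - l \<and>
          eucl_LCD ({..<n} - T) (puncture T C) \<and>
          cdim (puncture T C) = k \<and>
          min_dist (puncture T C) \<ge> d - l"
    using a by (simp add: el)
next
  fix q n k d l :: nat and C :: "(nat \<Rightarrow> 'b::{finite,field}) set"
  assume a: "card (UNIV :: 'b set) = q ^ 2 \<and>
      linear_code {..<n} C \<and> cdim C = k \<and> min_dist C = d \<and>
      cdim (herm_hull q {..<n} C) = l \<and> l < d"
  have "\<exists>T. T \<subseteq> {..<n} \<and> card T = l \<and>
          linear_code ({..<n} - T) (puncture T C) \<and>
          card ({..<n} - T) = n - l \<and>
          herm_LCD q ({..<n} - T) (puncture T C) \<and>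
          cdim (puncture T C) = cdim C \<and>
          min_dist (puncture T C) \<ge> d - l"
  proof -
    have c: "card (UNIV::'b set) = q^2" using a by blast
    show ?thesis
      by (rule main_gen[OF frob_props(2)[OF c] frob_props(3)[OF c] frob_props(1)[OF c]]) (use a in simp_all)
  qed
  then show "\<exists>T. T \<subseteq> {..<n} \<and> card T = l \<and>
          linear_code ({..<n} - T) (puncture T C) \<and>
          card ({..<n} - T) = n - l \<and>
          herm_LCD q ({..<n} - T) (puncture T C) \<and>
          cdim (puncture T C) = k \<and>
          min_dist (puncture T C) \<ge> d - l"
    using a by simp
qed

end
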